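(* Assume (A1)–(A3), $\alpha>1$, $\mu>0$, $LR_{target}>0$, and $\rho<\ln(10)\,LR_{target}\,\mu$, with $c_{opt},\rho,T_{bc,opt},AUC_{bc,opt}$ as defined below, and let $T_{opt}=\frac{\ln(10)LR_{target}}{k(c_{opt})-r}$, $AUC_{opt}=T_{opt}c_{opt}$, $\tau=\ln(2)/\mu$. Then $$T_{opt}-T_{bc,opt}=\frac{\tau}{\ln 2}\cdot\frac{\rho}{k(c_{opt})-r},\qquad 0<T_{opt}-T_{bc,opt}\le\frac{\tau}{\ln 2}\left(1-\frac{zMIC}{c_{opt}}\right),$$ and $$AUC_{bc,opt}-AUC_{opt}=\frac{\tau}{\ln 2}\left(1-\frac{\rho}{k(c_{opt})-r}\right)c_{opt}\ \ge\ \frac{\tau}{\ln 2}\,zMIC.$$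
   Context: Let $r>0$ and let $k:[0,\infty)\to[0,\infty)$ satisfy: (A1) $k(0)=0$, $k$ is continuous and strictly increasing on $[0,\infty)$, and twice differentiable on $(0,\infty)$; (A2) $\lim_{c\to\infty}k(c)=k_{max}<\infty$; (A3) either (i) (concave case) $k''(c)<0$ for all $c>0$, or (ii) (sigmoidal case) there is $c_{infl}>0$ with $k''(c)>0$ for $0<c<c_{infl}$ and $k''(c)<0$ for $c>c_{infl}$. Set $\alpha=k_{max}/r$; $zMIC$ is the unique $c>0$ with $k(c)=r$; $c_{opt}$ is the unique solution in $(0,\infty)$ of $k'(c)=\frac{k(c)-r}{c}$ (the maximizer of $(k(c)-r)/c$); $\rho=\int_{zMIC}^{c_{opt}}\frac{k(u)-r}{u}du$; $T_{bc,opt}=\frac{\ln(10)LR_{target}-\mu^{-1}\rho}{k(c_{opt})-r}$; $AUC_{bc,opt}=\left[\mu^{-1}+T_{bc,opt}\right]c_{opt}$. *)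

theory Defs
  imports "HOL-Analysis.Analysis"
begin

definition kill_assms :: "(real \<Rightarrow> real) \<Rightarrow> real \<Rightarrow> real \<Rightarrow> bool" where
  "kill_assms k r kmax \<longleftrightarrow>
     r > 0 \<and>
     (\<forall>c\<ge>0. k c \<ge> 0) \<and>
     k 0 = 0 \<and> continuous_on {0..} k \<and> strict_mono_on {0..} k \<and>
     (\<forall>c>0. k differentiable (at c) \<and> deriv k differentiable (at c)) \<and>
     (k \<longlongrightarrow> kmax) at_top \<and>
     ((\<forall>c>0. deriv (deriv k) c < 0) \<or>
      (\<exists>c_infl>0. (\<forall>c. 0 < c \<and> c < c_infl \<longrightarrow> deriv (deriv k) c > 0) \<and>
                  (\<forall>c>c_infl. deriv (deriv k) c < 0)))"

definition zMIC :: "(real \<Rightarrow> real) \<Rightarrow> real \<Rightarrow> real" where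
  "zMIC k r = (THE c. c > 0 \<and> k c = r)"

definition c_opt :: "(real \<Rightarrow> real) \<Rightarrow> real \<Rightarrow> real" where
  "c_opt k r = (THE c. c > 0 \<and> deriv k c = (k c - r) / c)"

definition rho :: "(real \<Rightarrow> real) \<Rightarrow> real \<Rightarrow> real" where
  "rho k r = integral {zMIC k r..c_opt k r} (\<lambda>u. (k u - r) / u)"

definition T_bc_opt :: "(real \<Rightarrow> real) \<Rightarrow> real \<Rightarrow> real \<Rightarrow> real \<Rightarrow> real" where
  "T_bc_opt k r \<mu> LR = (ln 10 * LR - rho k r / \<mu>) / (k (c_opt k r) - r)"

definition AUC_bc_opt :: "(real \<Rightarrow> real) \<Rightarrow> real \<Rightarrow> real \<Rightarrow> real \<Rightarrow> real" where
  "AUC_bc_opt k r \<mu> LR = (1 / \<mu> + T_bc_opt k r \<mu> LR) * c_opt k r"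

definition T_opt :: "(real \<Rightarrow> real) \<Rightarrow> real \<Rightarrow> real \<Rightarrow> real" where
  "T_opt k r LR = ln 10 * LR / (k (c_opt k r) - r)"

definition AUC_opt :: "(real \<Rightarrow> real) \<Rightarrow> real \<Rightarrow> real \<Rightarrow> real" where
  "AUC_opt k r LR = T_opt k r LR * c_opt k r"

end

theory Submission
  imports Defs
begin

theorem mainTheorem9:
  fixes k :: "real \<Rightarrow> real" and r kmax \<mu> LR :: real
  assumes "kill_assms k r kmax"
    and "kmax / r > 1"
    and "\<mu> > 0" and "LR > 0"
    and "rho k r < ln 10 * LR * \<mu>"
  shows "let \<tau> = ln 2 / \<mu>;
             Topt = T_opt k r LR; Tbc = T_bc_opt k r \<mu> LR;
             c = c_opt k r; \<kappa> = k (c_opt k r) - r in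
           Topt - Tbc = \<tau> / ln 2 * (rho k r / \<kappa>) \<and>
           0 < Topt - Tbc \<and> Topt - Tbc \<le> \<tau> / ln 2 * (1 - zMIC k r / c) \<and>
           AUC_bc_opt k r \<mu> LR - AUC_opt k r LR = \<tau> / ln 2 * (1 - rho k r / \<kappa>) * c \<and>
           \<tau> / ln 2 * (1 - rho k r / \<kappa>) * c \<ge> \<tau> / ln 2 * zMIC k r"
proof -
  have r0: "r > 0" and k0: "k 0 = 0" and kcont: "continuous_on {0..} k"
    and kmono: "strict_mono_on {0..} k"
    and kdiff: "\<And>c. c > 0 \<Longrightarrow> k differentiable (at c) \<and> deriv k differentiable (at c)"
    and klim: "(k \<longlongrightarrow> kmax) at_top"
    and curv: "(\<forall>c>0. deriv (deriv k) c < 0) \<or>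
      (\<exists>c_infl>0. (\<forall>c. 0 < c \<and> c < c_infl \<longrightarrow> deriv (deriv k) c > 0) \<and>
                  (\<forall>c>c_infl. deriv (deriv k) c < 0))"
    using assms(1) unfolding kill_assms_def by auto
  have kmax: "kmax > r" using assms(2) r0 by (simp add: field_simps)
  have D1: "\<And>x. x > 0 \<Longrightarrow> DERIV k x :> deriv k x"
    using kdiff DERIV_deriv_iff_real_differentiable by blast
  have D2: "\<And>x. x > 0 \<Longrightarrow> DERIV (deriv k) x :> deriv (deriv k) x"
    using kdiff DERIV_deriv_iff_real_differentiable by blast
  have kcont': "\<And>a b. 0 < a \<Longrightarrow> continuous_on {a..b} (deriv k)"
    by (rule continuous_at_imp_continuous_on) (auto intro!: DERIV_isCont[OF D2])
  define h where "h x = x * deriv k x - k x + r" for x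
  define g where "g x = (k x - r) / x" for x
  have Dh: "\<And>x. x > 0 \<Longrightarrow> DERIV h x :> x * deriv (deriv k) x"
  proof -
    fix x :: real assume x: "x > 0"
    have m: "DERIV (\<lambda>z. z * deriv k z) x :> x * deriv (deriv k) x + 1 * deriv k x"
      by (rule DERIV_mult'[OF DERIV_ident D2[OF x]])
    have "DERIV h x :> (x * deriv (deriv k) x + 1 * deriv k x - deriv k x + 0)"
      unfolding h_def by (intro derivative_intros D1 m x)
    then show "DERIV h x :> x * deriv (deriv k) x" by simp
  qed
  have hcont: "\<And>a b. 0 < a \<Longrightarrow> continuous_on {a..b} h"
    by (rule continuous_at_imp_continuous_on) (auto intro!: DERIV_isCont[OF Dh])
  have Dg: "\<And>x. x > 0 \<Longrightarrow> DERIV g x :> h x / x^2"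
  proof -
    fix x :: real assume x: "x > 0"
    have "DERIV g x :> ((deriv k x - 0) * x - (k x - r) * 1) / (x * x)"
      unfolding g_def by (intro derivative_intros D1 x) (use x in auto)
    then show "DERIV g x :> h x / x^2" by (simp add: h_def power2_eq_square algebra_simps)
  qed
  have kneg: "\<And>x. x>0 \<Longrightarrow> deriv (deriv k) x < 0 \<Longrightarrow> \<exists>y. DERIV (deriv k) x :> y \<and> y < 0"
    using D2 by blast
  have kposd: "\<And>x. x>0 \<Longrightarrow> deriv (deriv k) x > 0 \<Longrightarrow> \<exists>y. DERIV (deriv k) x :> y \<and> y > 0"
    using D2 by blast
  have hneg: "\<And>x. x>0 \<Longrightarrow> deriv (deriv k) x < 0 \<Longrightarrow> \<exists>y. DERIV h x :> y \<and> y < 0"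
    using Dh mult_pos_neg by blast
  have hposd: "\<And>x. x>0 \<Longrightarrow> deriv (deriv k) x > 0 \<Longrightarrow> \<exists>y. DERIV h x :> y \<and> y > 0"
    using Dh by (meson mult_pos_pos)
  have gposd: "\<And>x. x>0 \<Longrightarrow> h x > 0 \<Longrightarrow> \<exists>y. DERIV g x :> y \<and> y > 0"
    using Dg by (meson divide_pos_pos zero_less_power)
  have gnnd: "\<And>x. x>0 \<Longrightarrow> h x \<ge> 0 \<Longrightarrow> \<exists>y. DERIV g x :> y \<and> y \<ge> 0"
    using Dg by (meson divide_nonneg_pos zero_less_power)
  have kd0: "\<And>x. x > 0 \<Longrightarrow> deriv k x \<ge> 0"
    by (rule mono_on_imp_deriv_nonneg[OF strict_mono_on_imp_mono_on[OF kmono] D1]) auto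
  have kdpos: "\<And>x. x > 0 \<Longrightarrow> deriv k x > 0"
  proof (rule ccontr)
    fix x0 :: real assume x0: "x0 > 0" and n: "\<not> deriv k x0 > 0"
    then have e: "deriv k x0 = 0" using kd0[OF x0] by linarith
    show False
      using curv
    proof
      assume cc: "\<forall>c>0. deriv (deriv k) c < 0"
      have "deriv k x0 > deriv k (x0 + 1)"
        by (rule DERIV_neg_imp_decreasing[of x0 "x0+1" "deriv k"]) (use x0 cc in \<open>auto intro!: kneg\<close>)
      then show False using kd0[of "x0+1"] x0 e by simp
    next
      assume "\<exists>c_infl>0. (\<forall>c. 0 < c \<and> c < c_infl \<longrightarrow> deriv (deriv k) c > 0) \<and>
                  (\<forall>c>c_infl. deriv (deriv k) c < 0)"
      then obtain ci where ci: "ci > 0" "\<forall>c. 0 < c \<and> c < ci \<longrightarrow> deriv (deriv k) c > 0"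
        "\<forall>c>ci. deriv (deriv k) c < 0" by blast
      show False
      proof (cases "x0 < ci")
        case True
        have "deriv k (x0/2) < deriv k x0"
          by (rule DERIV_pos_imp_increasing_open[of "x0/2" x0 "deriv k"]) (use x0 ci True kcont' in \<open>auto intro!: kposd\<close>)
        then show False using kd0[of "x0/2"] x0 e by simp
      next
        case False
        have "deriv k x0 > deriv k (x0 + 1)"
          by (rule DERIV_neg_imp_decreasing_open[of x0 "x0+1" "deriv k"]) (use x0 ci False kcont' in \<open>auto intro!: kneg\<close>)
        then show False using kd0[of "x0+1"] x0 e by simp
      qed
    qed
  qed
  obtain M where M: "M > 0" "k M > r"
  proof -
    have "eventually (\<lambda>x. k x > r) at_top"
      using order_tendstoD(1)[OF klim kmax] .
    then obtain N where "\<forall>x\<ge>N. k x > r" by (auto simp: eventually_at_top_linorder)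
    then show ?thesis using that[of "max N 1"] by auto
  qed
  obtain z where z: "0 \<le> z" "z \<le> M" "k z = r"
    using IVT'[of k 0 r M] M k0 r0 continuous_on_subset[OF kcont, of "{0..M}"] by force
  have zpos: "z > 0" using z k0 r0 by (cases "z = 0") auto
  have kless: "k x < r" if "0 \<le> x" "x < z" for x
    using strict_mono_onD[OF kmono, of x z] z that by simp
  have kgr: "k x > r" if "z < x" for x
    using strict_mono_onD[OF kmono, of z x] z that by simp
  have zeq: "zMIC k r = z"
    unfolding zMIC_def
  proof (rule the_equality)
    show "0 < z \<and> k z = r" using zpos z by auto
    fix y assume "0 < y \<and> k y = r"
    then show "y = z" using kless[of y] kgr[of y] by (cases y z rule: linorder_cases) auto
  qed
  have hpos: "\<And>x. 0 < x \<Longrightarrow> x \<le> z \<Longrightarrow> h x > 0"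
  proof -
    fix x :: real assume x: "0 < x" "x \<le> z"
    have "k x \<le> r" using kless[of x] z x by (cases "x = z") auto
    then show "h x > 0" unfolding h_def using mult_pos_pos[OF x(1) kdpos[OF x(1)]] by linarith
  qed
  have huniq: "\<And>a b. 0 < a \<Longrightarrow> a < b \<Longrightarrow> h a = 0 \<Longrightarrow> h b = 0 \<Longrightarrow> False"
  proof -
    fix a b :: real assume ab: "0 < a" "a < b" "h a = 0" "h b = 0"
    show False using curv
    proof
      assume cc: "\<forall>c>0. deriv (deriv k) c < 0"
      have "h a > h b"
        by (rule DERIV_neg_imp_decreasing[of a b h]) (use ab cc in \<open>auto intro!: hneg\<close>)
      then show False using ab by simp
    next
      assume "\<exists>c_infl>0. (\<forall>c. 0 < c \<and> c < c_infl \<longrightarrow> deriv (deriv k) c > 0) \<and>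
                  (\<forall>c>c_infl. deriv (deriv k) c < 0)"
      then obtain ci where ci: "ci > 0" "\<forall>c. 0 < c \<and> c < ci \<longrightarrow> deriv (deriv k) c > 0"
        "\<forall>c>ci. deriv (deriv k) c < 0" by blast
      show False
      proof (cases "a \<le> ci")
        case True
        define x where "x = min a z / 2"
        have x: "0 < x" "x < a" "x \<le> z" using ab zpos by (auto simp: x_def)
        have "h x < h a"
          by (rule DERIV_pos_imp_increasing_open[of x a h]) (use x True ci hcont in \<open>auto intro!: hposd\<close>)
        then show False using hpos[OF x(1) x(3)] ab by simp
      next
        case False
        have "h a > h b"
          by (rule DERIV_neg_imp_decreasing[of a b h]) (use ab ci False in \<open>auto intro!: hneg\<close>)
        then show False using ab by simp
      qed
    qed
  qed
  have hroot_pos: "\<And>x. 0 < x \<Longrightarrow> h x < 0 \<Longrightarrow> \<exists>y. 0 < y \<and> y < x \<and> h y = 0"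
  proof -
    fix x :: real assume x: "0 < x" "h x < 0"
    define a where "a = min x z / 2"
    have a: "0 < a" "a < x" "a \<le> z" using x zpos by (auto simp: a_def)
    obtain y where "a \<le> y" "y \<le> x" "h y = 0"
      using IVT2'[of h x 0 a] hpos[OF a(1) a(3)] x a hcont[OF a(1), of x] by force
    then show "\<exists>y. 0 < y \<and> y < x \<and> h y = 0" using a x by (intro exI[of _ y]) (auto simp: le_less)
  qed
  have glim: "(g \<longlongrightarrow> 0) at_top"
  proof -
    have "((\<lambda>x. (k x - r) * inverse x) \<longlongrightarrow> (kmax - r) * 0) at_top"
      by (intro tendsto_mult tendsto_diff klim tendsto_const tendsto_inverse_0_at_top filterlim_ident)
    moreover have "g = (\<lambda>x. (k x - r) * inverse x)" by (auto simp: g_def divide_inverse fun_eq_iff)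
    ultimately show ?thesis by simp
  qed
  have hex: "\<exists>c>0. h c = 0"
  proof (rule ccontr)
    assume "\<not> (\<exists>c>0. h c = 0)"
    then have hp: "\<And>x. x > 0 \<Longrightarrow> h x > 0" using hroot_pos by (meson linorder_neqE_linordered_idom)
    have g1: "g (z+1) > 0" using kgr[of "z+1"] zpos by (simp add: g_def)
    have "eventually (\<lambda>x. g x < g (z+1)) at_top"
      using order_tendstoD(2)[OF glim g1] .
    then obtain N where N: "\<forall>x\<ge>N. g x < g (z+1)" by (auto simp: eventually_at_top_linorder)
    define y where "y = max N (z+2)"
    have "g (z+1) < g y"
      by (rule DERIV_pos_imp_increasing[of "z+1" y g]) (use hp zpos in \<open>auto simp: y_def intro!: gposd\<close>)
    moreover have "g y < g (z+1)" using N by (simp add: y_def)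
    ultimately show False by simp
  qed
  then obtain c where c: "c > 0" "h c = 0" by blast
  have ceq: "c_opt k r = c"
    unfolding c_opt_def
  proof (rule the_equality)
    show "0 < c \<and> deriv k c = (k c - r) / c" using c by (simp add: h_def field_simps)
    fix y assume y: "0 < y \<and> deriv k y = (k y - r) / y"
    then have "h y = 0" by (simp add: h_def field_simps)
    then show "y = c" using huniq[of y c] huniq[of c y] c y by (cases y c rule: linorder_cases) auto
  qed
  have cz: "c > z" using hpos[OF c(1)] c by force
  have hnn: "\<And>x. 0 < x \<Longrightarrow> x \<le> c \<Longrightarrow> h x \<ge> 0"
  proof -
    fix x :: real assume x: "0 < x" "x \<le> c"
    show "h x \<ge> 0"
    proof (rule ccontr)
      assume "\<not> h x \<ge> 0"
      then obtain y where "0 < y" "y < x" "h y = 0" using hroot_pos[of x] x by auto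
      then show False using huniq[of y c] c x by auto
    qed
  qed
  have gmono: "g u \<le> g v" if "0 < u" "u \<le> v" "v \<le> c" for u v
    by (rule DERIV_nonneg_imp_nondecreasing[of u v g]) (use hnn that in \<open>auto intro!: gnnd\<close>)
  have gpos: "\<And>u. z < u \<Longrightarrow> g u > 0" using kgr zpos by (simp add: g_def)
  have gcont: "continuous_on {z..c} g"
    unfolding g_def using zpos
    by (intro continuous_intros continuous_on_subset[OF kcont]) auto
  have gint: "\<And>a b. z \<le> a \<Longrightarrow> b \<le> c \<Longrightarrow> g integrable_on {a..b}"
    by (rule integrable_continuous_interval, rule continuous_on_subset[OF gcont]) auto
  define \<rho> where "\<rho> = integral {z..c} g"
  have rhoeq: "rho k r = \<rho>" unfolding rho_def \<rho>_def zeq ceq g_def ..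
  define m where "m = (z + c) / 2"
  have m: "z < m" "m < c" using cz by (auto simp: m_def)
  have split: "integral {z..m} g + integral {m..c} g = \<rho>"
    unfolding \<rho>_def by (rule Henstock_Kurzweil_Integration.integral_combine[of z m c g]) (use m gint[of z c] in auto)
  have i1: "integral {z..m} g \<ge> 0"
    by (rule integral_nonneg) (use gint m gpos in \<open>auto simp: le_less g_def z(3)\<close>)
  have "integral {m..c} (\<lambda>x. g m) \<le> integral {m..c} g"
    by (rule integral_le) (use gint m gmono zpos in auto)
  moreover have "integral {m..c} (\<lambda>x. g m) = (c - m) * g m" using m by simp
  moreover have "(c - m) * g m > 0" using m gpos[of m] by simp
  ultimately have rpos: "\<rho> > 0" using split i1 by linarith
  have "\<rho> \<le> integral {z..c} (\<lambda>x. g c)"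
    unfolding \<rho>_def by (rule integral_le) (use gint cz gmono zpos in auto)
  then have rle: "\<rho> \<le> (c - z) * g c" using cz by simp
  define \<kappa> where "\<kappa> = k c - r"
  have kap: "\<kappa> > 0" using kgr[OF cz] by (simp add: \<kappa>_def)
  have gc: "g c = \<kappa> / c" by (simp add: g_def \<kappa>_def)
  have key: "\<rho> / \<kappa> \<le> 1 - z / c"
  proof -
    have "\<rho> * c \<le> (c - z) * (\<kappa> / c) * c" using mult_right_mono[OF rle, of c] gc c(1) by simp
    also have "\<dots> = (c - z) * \<kappa>" using c(1) by simp
    finally have "\<rho> * c \<le> (c - z) * \<kappa>" .
    then show ?thesis using kap c(1) by (simp add: field_simps)
  qed
  have l2: "ln 2 / \<mu> / ln 2 = 1 / \<mu>" by simp
  show ?thesis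
    unfolding Let_def l2 rhoeq zeq ceq T_opt_def T_bc_opt_def AUC_bc_opt_def AUC_opt_def
    unfolding \<kappa>_def[symmetric]
  proof (intro conjI)
    show "ln 10 * LR / \<kappa> - (ln 10 * LR - \<rho> / \<mu>) / \<kappa> = 1 / \<mu> * (\<rho> / \<kappa>)"
      using kap assms(3) by (simp add: field_simps)
    show "0 < ln 10 * LR / \<kappa> - (ln 10 * LR - \<rho> / \<mu>) / \<kappa>"
      using kap assms(3) rpos by (simp add: field_simps)
    have "ln 10 * LR / \<kappa> - (ln 10 * LR - \<rho> / \<mu>) / \<kappa> = 1 / \<mu> * (\<rho> / \<kappa>)"
      using kap assms(3) by (simp add: field_simps)
    moreover have "1/\<mu> * (\<rho>/\<kappa>) \<le> 1 / \<mu> * (1 - z / c)"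
      using mult_left_mono[OF key, of "1/\<mu>"] assms(3) by simp
    ultimately show "ln 10 * LR / \<kappa> - (ln 10 * LR - \<rho> / \<mu>) / \<kappa> \<le> 1 / \<mu> * (1 - z / c)" by linarith
    show "(1 / \<mu> + (ln 10 * LR - \<rho> / \<mu>) / \<kappa>) * c - ln 10 * LR / \<kappa> * c = 1 / \<mu> * (1 - \<rho> / \<kappa>) * c"
      using kap assms(3) by (simp add: field_simps)
    have "z \<le> (1 - \<rho> / \<kappa>) * c" using key c by (simp add: field_simps)
    then show "1 / \<mu> * z \<le> 1 / \<mu> * (1 - \<rho> / \<kappa>) * c"
      using mult_left_mono[of z "(1 - \<rho> / \<kappa>) * c" "1/\<mu>"] assms(3) by (simp add: mult.assoc)
  qed
qed

end
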